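(* Let $h\ge 4$ be an integer and let $\hat e(h,4)=4/3$ if $h\equiv 1\pmod 3$, $\hat e(h,4)=1$ if $h\equiv 0\pmod 3$, and $\hat e(h,4)=2/3$ if $h\equiv 2 \pmod 3$. Then there exists $W\in\mathcal W^2_{h\times 4}$ with $e(W)=\hat e(h,4)$, i.e. $|W|_\blacksquare = 8h/3+\hat e(h,4)$. Moreover, if $h>4$, such a $W$ can be chosen to be a snake.
   Context: A 2-dimensional binary word of dimensions $h\times w$ is an $h\times w$ matrix $W$ with entries in $\{\square,\blacksquare\}$; entries $\blacksquare$ are filled cells, entries $\square$ empty cells, and $|W|_\blacksquare$ is the number of filled cells. Two cells $(i,j),(i',j')$ are adjacent if $|i-i'|+|j-j'|=1$; the degree of a filled cell is the number of filled cells adjacent to it. $\mathcal W^2_{h\times w}$ is the set of $h\times w$ binary words in which every filled cell has degree at most $2$. The excess of an $a\times b$ word $U$ is $e(U)=|U|_\blacksquare-2ab/3$. A word $W$ is a snake if its set of filled cells is nonempty and the graph whose vertices are the filled cells, with edges between adjacent filled cells, is a path. *)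

theory Defs
  imports Main "HOL.Real"
begin

text \<open>A binary word of dimensions h x w is represented by its set of filled cells,
  a subset of {0..<h} x {0..<w} (row index, column index).\<close>

definition adjacent :: "nat \<times> nat \<Rightarrow> nat \<times> nat \<Rightarrow> bool" where
  "adjacent c d \<longleftrightarrow>
     \<bar>int (fst c) - int (fst d)\<bar> + \<bar>int (snd c) - int (snd d)\<bar> = 1"

definition degree_in :: "(nat \<times> nat) set \<Rightarrow> nat \<times> nat \<Rightarrow> nat" where
  "degree_in W c = card {d \<in> W. adjacent c d}"

definition words2 :: "nat \<Rightarrow> nat \<Rightarrow> (nat \<times> nat) set set" where
  "words2 h w = {W. W \<subseteq> {0..<h} \<times> {0..<w} \<and> (\<forall>c\<in>W. degree_in W c \<le> 2)}"

definition excess :: "nat \<Rightarrow> nat \<Rightarrow> (nat \<times> nat) set \<Rightarrow> real" where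
  "excess a b U = real (card U) - 2 * real a * real b / 3"

definition snake :: "(nat \<times> nat) set \<Rightarrow> bool" where
  "snake W \<longleftrightarrow> (\<exists>xs. xs \<noteq> [] \<and> distinct xs \<and> set xs = W \<and>
     (\<forall>c\<in>W. \<forall>d\<in>W. adjacent c d \<longleftrightarrow>
        (\<exists>i. Suc i < length xs \<and> {xs ! i, xs ! Suc i} = {c, d})))"

definition ehat4 :: "nat \<Rightarrow> real" where
  "ehat4 h = (if h mod 3 = 1 then 4/3 else if h mod 3 = 0 then 1 else 2/3)"

end

theory Submission
  imports Defs
begin

fun cp :: "'a list \<Rightarrow> ('a \<times> 'a) set" where
  "cp (x # y # zs) = insert (x, y) (cp (y # zs))"
| "cp _ = {}"

lemma cp_Cons: "cp (x # xs) = (if xs = [] then {} else insert (x, hd xs) (cp xs))"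
  by (cases xs) auto

lemma cp_append:
  "cp (xs @ ys) = cp xs \<union> cp ys \<union> (if xs \<noteq> [] \<and> ys \<noteq> [] then {(last xs, hd ys)} else {})"
  by (induction xs) (auto simp: cp_Cons)

lemma cp_map: "cp (map f xs) = (\<lambda>(x, y). (f x, f y)) ` cp xs"
  by (induction xs rule: cp.induct) auto

lemma cp_set: "(x, y) \<in> cp xs \<Longrightarrow> x \<in> set xs \<and> y \<in> set xs"
  by (induction xs rule: cp.induct) auto

lemma cp_finite: "finite (cp xs)"
  by (induction xs rule: cp.induct) auto

lemma cp_nth: "(c, d) \<in> cp xs \<longleftrightarrow> (\<exists>i. Suc i < length xs \<and> xs ! i = c \<and> xs ! Suc i = d)"
proof (induction xs rule: cp.induct)
  case (1 x y zs)
  show ?case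
  proof
    assume "(c, d) \<in> cp (x # y # zs)"
    then consider "(c, d) = (x, y)" | "(c, d) \<in> cp (y # zs)" by auto
    then show "\<exists>i. Suc i < length (x # y # zs) \<and> (x # y # zs) ! i = c \<and> (x # y # zs) ! Suc i = d"
    proof cases
      case 1 then show ?thesis by (intro exI[of _ 0]) auto
    next
      case 2
      then obtain i where "Suc i < length (y # zs)" "(y # zs) ! i = c" "(y # zs) ! Suc i = d"
        using "1.IH" by auto
      then show ?thesis by (intro exI[of _ "Suc i"]) auto
    qed
  next
    assume "\<exists>i. Suc i < length (x # y # zs) \<and> (x # y # zs) ! i = c \<and> (x # y # zs) ! Suc i = d"
    then obtain i where i: "Suc i < length (x # y # zs)" "(x # y # zs) ! i = c" "(x # y # zs) ! Suc i = d"
      by blast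
    show "(c, d) \<in> cp (x # y # zs)"
    proof (cases i)
      case 0 then show ?thesis using i by auto
    next
      case (Suc j)
      then have "(c, d) \<in> cp (y # zs)" using i "1.IH" by auto
      then show ?thesis by auto
    qed
  qed
qed auto

lemma cp_uniq: "distinct xs \<Longrightarrow> (c, d) \<in> cp xs \<Longrightarrow> (c, d') \<in> cp xs \<Longrightarrow> d = d'"
  by (induction xs rule: cp.induct) (auto dest: cp_set)

lemma cp_tl: "(x, y) \<in> cp xs \<Longrightarrow> y \<in> set (tl xs)"
  by (induction xs rule: cp.induct) auto

lemma cp_uniq2: "distinct xs \<Longrightarrow> (d, c) \<in> cp xs \<Longrightarrow> (d', c) \<in> cp xs \<Longrightarrow> d = d'"
  by (induction xs rule: cp.induct) (auto dest: cp_set cp_tl)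

definition inpath :: "(nat \<times> nat) list \<Rightarrow> bool" where
  "inpath xs \<longleftrightarrow> distinct xs \<and>
     (\<forall>c\<in>set xs. \<forall>d\<in>set xs. adjacent c d \<longleftrightarrow> ((c, d) \<in> cp xs \<or> (d, c) \<in> cp xs))"

lemma card_le1: "finite A \<Longrightarrow> (\<And>x y. x \<in> A \<Longrightarrow> y \<in> A \<Longrightarrow> x = y) \<Longrightarrow> card A \<le> 1"
  by (metis card_le_Suc0_iff_eq One_nat_def)

lemma inpath_deg:
  assumes "inpath xs" "c \<in> set xs"
  shows "degree_in (set xs) c \<le> 2"
proof -
  have d: "distinct xs" using assms unfolding inpath_def by auto
  let ?A = "{d. (c, d) \<in> cp xs}" and ?B = "{d. (d, c) \<in> cp xs}"
  have fA: "finite ?A"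
    by (rule finite_subset[of _ "snd ` cp xs"]) (use cp_finite in force)+
  have fB: "finite ?B"
    by (rule finite_subset[of _ "fst ` cp xs"]) (use cp_finite in force)+
  have cA: "card ?A \<le> 1" using fA by (rule card_le1) (use cp_uniq[OF d] in blast)
  have cB: "card ?B \<le> 1" using fB by (rule card_le1) (use cp_uniq2[OF d] in blast)
  have "{d \<in> set xs. adjacent c d} \<subseteq> ?A \<union> ?B"
    using assms unfolding inpath_def by auto
  then have "card {d \<in> set xs. adjacent c d} \<le> card (?A \<union> ?B)"
    using fA fB by (intro card_mono) auto
  also have "\<dots> \<le> card ?A + card ?B" by (rule card_Un_le)
  finally show ?thesis using cA cB unfolding degree_in_def by linarith
qed

lemma inpath_snake: "xs \<noteq> [] \<Longrightarrow> inpath xs \<Longrightarrow> snake (set xs)"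
  unfolding snake_def inpath_def
  apply (rule exI[of _ xs])
  apply (simp add: cp_nth doubleton_eq_iff)
  apply (metis)
  done


definition sh :: "nat \<Rightarrow> nat \<times> nat \<Rightarrow> nat \<times> nat" where
  "sh k p = (fst p + k, snd p)"

lemma sh_simp[simp]: "sh k (r, c) = (r + k, c)"
  by (simp add: sh_def)

lemma sh_inj: "inj (sh k)"
  by (auto simp: inj_def sh_def prod_eq_iff)

lemma adj_sh[simp]: "adjacent (sh k c) (sh k d) = adjacent c d"
  by (cases c; cases d) (simp add: adjacent_def)

lemma adj_sym: "adjacent c d = adjacent d c"
  by (auto simp: adjacent_def)

lemma step:
  fixes L Rr xs :: "(nat \<times> nat) list"
  assumes k: "0 < k"
    and xne: "xs \<noteq> []" and xsub: "set xs \<subseteq> {0..<H} \<times> {0..<4}" and xp: "inpath xs"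
    and xh: "hd xs = (0, a)" and xl: "last xs = (0, b)"
    and Lne: "L \<noteq> []" and dLR: "distinct (L @ Rr)" and LRsub: "set (L @ Rr) \<subseteq> {0..<k} \<times> {0..<4}"
    and LRadj: "\<forall>c\<in>set (L @ Rr). \<forall>d\<in>set (L @ Rr).
        adjacent c d \<longleftrightarrow> ((c, d) \<in> cp L \<union> cp Rr \<or> (d, c) \<in> cp L \<union> cp Rr)"
    and lL: "last L = (k - 1, a)" and hR: "Rr \<noteq> [] \<Longrightarrow> hd Rr = (k - 1, b)"
    and cross: "\<And>j. (0, j) \<in> set xs \<Longrightarrow> (k - 1, j) \<in> set (L @ Rr) \<Longrightarrow> j = a \<or> (Rr \<noteq> [] \<and> j = b)"
  shows "inpath (L @ map (sh k) xs @ Rr) \<and> set (L @ map (sh k) xs @ Rr) \<subseteq> {0..<H + k} \<times> {0..<4}"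
proof -
  let ?ys = "L @ map (sh k) xs @ Rr"
  let ?B = "set (L @ Rr)" and ?S = "sh k ` set xs"
  have setys: "set ?ys = ?B \<union> ?S" by auto
  have rowB: "\<And>p. p \<in> ?B \<Longrightarrow> fst p < k" using LRsub by auto
  have rowS: "\<And>p. p \<in> ?S \<Longrightarrow> fst p \<ge> k" by (auto simp: sh_def)
  have disj: "?B \<inter> ?S = {}" using rowB rowS by fastforce
  have dxs: "distinct xs" using xp by (simp add: inpath_def)
  have dys: "distinct ?ys"
    using dLR dxs disj by (auto simp: distinct_map inj_on_def sh_inj[unfolded inj_def])
  define E where "E = (if Rr \<noteq> [] then {(sh k (last xs), hd Rr)} else {})"
  have E1: "\<And>p. p \<in> E \<Longrightarrow> Rr \<noteq> [] \<and> p = (sh k (last xs), hd Rr)"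
    and E2: "Rr \<noteq> [] \<Longrightarrow> (sh k (last xs), hd Rr) \<in> E" by (auto simp: E_def split: if_splits)
  let ?cS = "(\<lambda>(x, y). (sh k x, sh k y)) ` cp xs"
  have cpys: "cp ?ys = cp L \<union> ?cS \<union> cp Rr \<union> {(last L, sh k (hd xs))} \<union> E"
    using Lne xne by (auto simp: cp_append cp_map hd_map last_map E_def)
  have cSin: "\<And>p. p \<in> ?cS \<Longrightarrow> fst p \<in> ?S \<and> snd p \<in> ?S"
    by (auto simp del: sh_simp dest: cp_set)
  have cSiff: "\<And>c' d'. (sh k c', sh k d') \<in> ?cS \<longleftrightarrow> (c', d') \<in> cp xs"
  proof
    fix c' d' assume "(sh k c', sh k d') \<in> ?cS"
    then obtain u v where "(u, v) \<in> cp xs" "sh k c' = sh k u" "sh k d' = sh k v" by auto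
    then show "(c', d') \<in> cp xs" using injD[OF sh_inj] by metis
  qed auto
  have cLRin: "\<And>p. p \<in> cp L \<union> cp Rr \<Longrightarrow> fst p \<in> ?B \<and> snd p \<in> ?B"
    by (auto dest: cp_set)
  have hS: "sh k (hd xs) \<in> ?S" "sh k (last xs) \<in> ?S" using xne by auto
  have lLB: "last L \<in> ?B" using Lne by simp
  have hRB: "Rr \<noteq> [] \<Longrightarrow> hd Rr \<in> ?B" by simp
  have mem: "\<And>p. p \<in> cp ?ys \<longleftrightarrow> p \<in> cp L \<union> cp Rr \<or> p \<in> ?cS \<or> p = (last L, sh k (hd xs)) \<or> p \<in> E"
    unfolding cpys by blast
  have BB: "adjacent c d \<longleftrightarrow> ((c, d) \<in> cp ?ys \<or> (d, c) \<in> cp ?ys)" if "c \<in> ?B" "d \<in> ?B" for c d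
  proof -
    have nc: "c \<notin> ?S" "d \<notin> ?S" using that disj by blast+
    have "(c, d) \<in> cp ?ys \<longleftrightarrow> (c, d) \<in> cp L \<union> cp Rr"
      unfolding mem using nc cSin[of "(c,d)"] hS E1[of "(c,d)"] by (metis fst_conv snd_conv prod.inject)
    moreover have "(d, c) \<in> cp ?ys \<longleftrightarrow> (d, c) \<in> cp L \<union> cp Rr"
      unfolding mem using nc cSin[of "(d,c)"] hS E1[of "(d,c)"] by (metis fst_conv snd_conv prod.inject)
    ultimately show ?thesis using LRadj that by blast
  qed
  have SS: "adjacent c d \<longleftrightarrow> ((c, d) \<in> cp ?ys \<or> (d, c) \<in> cp ?ys)" if hcd: "c \<in> ?S" "d \<in> ?S" for c d
  proof -
    obtain c' d' where c': "c' \<in> set xs" "c = sh k c'" and d': "d' \<in> set xs" "d = sh k d'"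
      using hcd by blast
    have ncB: "c \<notin> ?B" "d \<notin> ?B" using hcd disj by blast+
    have g: "p \<in> cp ?ys \<longleftrightarrow> p \<in> ?cS" if "fst p \<notin> ?B" "snd p \<notin> ?B" for p
    proof -
      have "p \<notin> cp L \<union> cp Rr" using cLRin that by blast
      moreover have "p \<noteq> (last L, sh k (hd xs))" using lLB that by auto
      moreover have "p \<notin> E" using E1 hRB that by fastforce
      ultimately show ?thesis unfolding mem by blast
    qed
    have e1: "(c, d) \<in> cp ?ys \<longleftrightarrow> (c', d') \<in> cp xs"
      using g[of "(c,d)"] ncB cSiff c'(2) d'(2) by simp
    have e2: "(d, c) \<in> cp ?ys \<longleftrightarrow> (d', c') \<in> cp xs"
      using g[of "(d,c)"] ncB cSiff c'(2) d'(2) by simp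
    show ?thesis using xp c' d' e1 e2 unfolding inpath_def by auto
  qed
  have BS: "adjacent c d \<longleftrightarrow> ((c, d) \<in> cp ?ys \<or> (d, c) \<in> cp ?ys)" if hcd: "c \<in> ?B" "d \<in> ?S" for c d
  proof -
    obtain d' where d': "d' \<in> set xs" "d = sh k d'" using hcd by blast
    obtain r j where c: "c = (r, j)" by (cases c)
    obtain r' j' where dd: "d' = (r', j')" by (cases d')
    have r: "r < k" using rowB[OF that(1)] c by simp
    have ncS: "c \<notin> ?S" "d \<notin> ?B" using hcd disj by blast+
    have n1: "(c, d) \<notin> cp L \<union> cp Rr" "(d, c) \<notin> cp L \<union> cp Rr" using cLRin ncS by fastforce+
    have n2: "(c, d) \<notin> ?cS" "(d, c) \<notin> ?cS" using cSin ncS by fastforce+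
    have n3: "(c, d) \<notin> E" using E1 hS ncS by fastforce
    have n4: "(d, c) \<noteq> (last L, sh k (hd xs))" using lLB ncS by auto
    have f1: "(c, d) \<in> cp ?ys \<longleftrightarrow> c = last L \<and> d = sh k (hd xs)"
      unfolding mem using n1 n2 n3 by auto
    have f2: "(d, c) \<in> cp ?ys \<longleftrightarrow> Rr \<noteq> [] \<and> d = sh k (last xs) \<and> c = hd Rr"
      unfolding mem using n1 n2 n4 E1[of "(d,c)"] E2 by auto
    show ?thesis
    proof
      assume "adjacent c d"
      then have "\<bar>int r - int (r' + k)\<bar> + \<bar>int j - int j'\<bar> = 1"
        using c d' dd by (simp add: adjacent_def)
      then have rr: "r = k - 1" "r' = 0" "j' = j" using r by auto
      then have "(0, j) \<in> set xs" "(k - 1, j) \<in> ?B" using d' dd that(1) c by auto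
      from cross[OF this] have "j = a \<or> (Rr \<noteq> [] \<and> j = b)" .
      then show "(c, d) \<in> cp ?ys \<or> (d, c) \<in> cp ?ys"
      proof
        assume "j = a" then show ?thesis using f1 c rr lL xh d' dd by simp
      next
        assume "Rr \<noteq> [] \<and> j = b" then show ?thesis using f2 c rr hR xl d' dd by simp
      qed
    next
      assume "(c, d) \<in> cp ?ys \<or> (d, c) \<in> cp ?ys"
      then show "adjacent c d"
      proof
        assume "(c, d) \<in> cp ?ys"
        then show ?thesis using f1 lL xh k by (simp add: adjacent_def)
      next
        assume "(d, c) \<in> cp ?ys"
        then show ?thesis using f2 hR xl k by (auto simp: adjacent_def)
      qed
    qed
  qed
  have "\<forall>c\<in>set ?ys. \<forall>d\<in>set ?ys. adjacent c d \<longleftrightarrow> ((c, d) \<in> cp ?ys \<or> (d, c) \<in> cp ?ys)"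
  proof (intro ballI)
    fix c d assume "c \<in> set ?ys" "d \<in> set ?ys"
    then consider "c \<in> ?B" "d \<in> ?B" | "c \<in> ?S" "d \<in> ?S" | "c \<in> ?B" "d \<in> ?S" | "c \<in> ?S" "d \<in> ?B"
      unfolding setys by blast
    then show "adjacent c d \<longleftrightarrow> ((c, d) \<in> cp ?ys \<or> (d, c) \<in> cp ?ys)"
    proof cases
      case 1 then show ?thesis by (rule BB)
    next
      case 2 then show ?thesis by (rule SS)
    next
      case 3 then show ?thesis by (rule BS)
    next
      case 4 then show ?thesis using BS[of d c] adj_sym by blast
    qed
  qed
  moreover have "set ?ys \<subseteq> {0..<H + k} \<times> {0..<4}"
    using LRsub xsub by (auto simp: sh_def)
  ultimately show ?thesis using dys by (simp add: inpath_def)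
qed


definition good :: "nat \<Rightarrow> (nat \<times> nat) list \<Rightarrow> nat \<Rightarrow> nat \<Rightarrow> nat set \<Rightarrow> bool" where
  "good H xs a b R \<longleftrightarrow> xs \<noteq> [] \<and> set xs \<subseteq> {0..<H} \<times> {0..<4} \<and> inpath xs \<and>
     hd xs = (0, a) \<and> last xs = (0, b) \<and> (\<forall>j. (0, j) \<in> set xs \<longrightarrow> j \<in> R)"

definition I3 :: "(nat \<times> nat) list" where
  "I3 = [(0,0),(1,0),(2,0),(2,1),(2,2),(2,3),(1,3),(0,3),(0,2)]"
definition I6 :: "(nat \<times> nat) list" where
  "I6 = [(0,0),(1,0),(1,1),(2,1),(3,1),(3,0),(4,0),(5,0),(5,1),(5,2),(4,2),(4,3),(3,3),(2,3),(1,3),(0,3),(0,2)]"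
definition TIL :: "(nat \<times> nat) list" where
  "TIL = [(0,0),(1,0),(1,1),(2,1),(3,1),(3,0),(4,0),(5,0)]"
definition TIR :: "(nat \<times> nat) list" where
  "TIR = [(5,2),(4,2),(4,3),(3,3),(2,3),(1,3),(0,3),(0,2)]"
definition J2 :: "(nat \<times> nat) list" where
  "J2 = [(0,0),(1,0),(1,1),(1,2),(0,2),(0,3)]"
definition J5 :: "(nat \<times> nat) list" where
  "J5 = [(0,0),(1,0),(2,0),(3,0),(4,0),(4,1),(4,2),(4,3),(3,3),(2,3),(2,2),(1,2),(0,2),(0,3)]"
definition TJL :: "(nat \<times> nat) list" where
  "TJL = [(0,0),(1,0),(2,0),(3,0),(3,1),(4,1),(5,1),(5,0)]"
definition TJR :: "(nat \<times> nat) list" where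
  "TJR = [(5,3),(4,3),(3,3),(2,3),(2,2),(1,2),(0,2),(0,3)]"
definition CAP :: "(nat \<times> nat) list" where
  "CAP = [(1,0),(0,0),(0,1),(0,2),(0,3),(1,3),(2,3),(2,2),(2,1),(3,1),(3,0)]"

lemma good_I3: "good 3 I3 0 2 {0,2,3}"
  by (simp add: good_def I3_def inpath_def adjacent_def)

lemma good_I6: "good 6 I6 0 2 {0,2,3}"
  by (simp add: good_def I6_def inpath_def adjacent_def)

lemma good_J2: "good 2 J2 0 3 {0,2,3}"
  by (simp add: good_def J2_def inpath_def adjacent_def)

lemma good_J5: "good 5 J5 0 3 {0,2,3}"
  by (simp add: good_def J5_def inpath_def adjacent_def)


lemma step_good:
  assumes g: "good H xs a b R" and k: "0 < k"
    and Lne: "L \<noteq> []" and Rne: "Rr \<noteq> []" and dLR: "distinct (L @ Rr)"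
    and LRsub: "set (L @ Rr) \<subseteq> {0..<k} \<times> {0..<4}"
    and LRadj: "\<forall>c\<in>set (L @ Rr). \<forall>d\<in>set (L @ Rr).
        adjacent c d \<longleftrightarrow> ((c, d) \<in> cp L \<union> cp Rr \<or> (d, c) \<in> cp L \<union> cp Rr)"
    and lL: "last L = (k - 1, a)" and hR: "hd Rr = (k - 1, b)"
    and cross: "\<And>j. j \<in> R \<Longrightarrow> (k - 1, j) \<in> set (L @ Rr) \<Longrightarrow> j = a \<or> j = b"
    and hL: "hd L = (0, a')" and lR: "last Rr = (0, b')"
    and top: "\<And>j. (0, j) \<in> set (L @ Rr) \<Longrightarrow> j \<in> R'"
  shows "good (H + k) (L @ map (sh k) xs @ Rr) a' b' R'"
proof -
  have x: "xs \<noteq> []" "set xs \<subseteq> {0..<H} \<times> {0..<4}" "inpath xs" "hd xs = (0, a)" "last xs = (0, b)"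
    "\<And>j. (0, j) \<in> set xs \<Longrightarrow> j \<in> R" using g unfolding good_def by auto
  have st: "inpath (L @ map (sh k) xs @ Rr) \<and> set (L @ map (sh k) xs @ Rr) \<subseteq> {0..<H + k} \<times> {0..<4}"
    by (rule step[OF k x(1-5) Lne dLR LRsub LRadj lL]) (use hR cross x(6) Rne in auto)
  have "(0, j) \<notin> sh k ` set xs" for j using k by (auto simp: sh_def)
  then show ?thesis using st Lne Rne hL lR top unfolding good_def by auto
qed

lemma step_I: "good H xs 0 2 {0,2,3} \<Longrightarrow> good (H + 6) (TIL @ map (sh 6) xs @ TIR) 0 2 {0,2,3}"
  by (rule step_good) (auto simp: TIL_def TIR_def adjacent_def)

lemma step_J: "good H xs 0 3 {0,2,3} \<Longrightarrow> good (H + 6) (TJL @ map (sh 6) xs @ TJR) 0 3 {0,2,3}"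
  by (rule step_good) (auto simp: TJL_def TJR_def adjacent_def)

fun GI :: "nat \<Rightarrow> (nat \<times> nat) list" where
  "GI 0 = I3"
| "GI (Suc 0) = I6"
| "GI (Suc (Suc n)) = TIL @ map (sh 6) (GI n) @ TIR"

fun GJ :: "nat \<Rightarrow> (nat \<times> nat) list" where
  "GJ 0 = J2"
| "GJ (Suc 0) = J5"
| "GJ (Suc (Suc n)) = TJL @ map (sh 6) (GJ n) @ TJR"

lemma GI_good: "good (3 + 3 * n) (GI n) 0 2 {0,2,3}"
proof (induction n rule: GI.induct)
  case 1 then show ?case using good_I3 by simp
next
  case 2 then show ?case using good_I6 by simp
next
  case (3 n)
  have "3 + 3 * Suc (Suc n) = (3 + 3 * n) + 6" by simp
  then show ?case using step_I[OF 3] by simp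
qed

lemma GJ_good: "good (2 + 3 * n) (GJ n) 0 3 {0,2,3}"
proof (induction n rule: GJ.induct)
  case 1 then show ?case using good_J2 by simp
next
  case 2 then show ?case using good_J5 by simp
next
  case (3 n)
  have "2 + 3 * Suc (Suc n) = (2 + 3 * n) + 6" by simp
  then show ?case using step_J[OF 3] by simp
qed

lemma GI_len: "length (GI n) = 9 + 8 * n"
  by (induction n rule: GI.induct) (simp_all add: I3_def I6_def TIL_def TIR_def)

lemma GJ_len: "length (GJ n) = 6 + 8 * n"
  by (induction n rule: GJ.induct) (simp_all add: J2_def J5_def TJL_def TJR_def)

lemma cap_inpath:
  assumes "good H xs 0 2 {0,2,3}"
  shows "inpath (CAP @ map (sh 4) xs) \<and> set (CAP @ map (sh 4) xs) \<subseteq> {0..<H + 4} \<times> {0..<4}"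
proof -
  have x: "xs \<noteq> []" "set xs \<subseteq> {0..<H} \<times> {0..<4}" "inpath xs" "hd xs = (0, 0)" "last xs = (0, 2)"
    "\<And>j. (0, j) \<in> set xs \<Longrightarrow> j \<in> {0,2,3}" using assms unfolding good_def by auto
  have "inpath (CAP @ map (sh 4) xs @ []) \<and> set (CAP @ map (sh 4) xs @ []) \<subseteq> {0..<H + 4} \<times> {0..<4}"
    apply (rule step[where b = 2, OF _ x(1-5)])
    apply (auto simp: CAP_def adjacent_def)
    using x(6) by force
  then show ?thesis by simp
qed

lemma final:
  assumes "inpath xs" "set xs \<subseteq> {0..<H} \<times> {0..<4}" "xs \<noteq> []"
  shows "set xs \<in> words2 H 4" "snake (set xs)" "card (set xs) = length xs"
proof -
  show "set xs \<in> words2 H 4" using assms inpath_deg unfolding words2_def by auto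
  show "snake (set xs)" using assms inpath_snake by auto
  show "card (set xs) = length xs" using assms distinct_card unfolding inpath_def by auto
qed


lemma exists_good:
  assumes "h \<ge> 5"
  shows "\<exists>xs. inpath xs \<and> set xs \<subseteq> {0..<h} \<times> {0..<4} \<and> xs \<noteq> [] \<and>
           real (length xs) - 2 * real h * 4 / 3 = ehat4 h"
proof -
  have dm: "h = 3 * (h div 3) + h mod 3" by simp
  consider "h mod 3 = 0" | "h mod 3 = 1" | "h mod 3 = 2" by linarith
  then show ?thesis
  proof cases
    case 1
    define n where "n = h div 3 - 1"
    have hn: "h = 3 + 3 * n" using 1 assms dm unfolding n_def by linarith
    have g: "good h (GI n) 0 2 {0,2,3}" using GI_good[of n] hn by simp
    have e: "ehat4 h = 1" using 1 by (simp add: ehat4_def)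
    have r: "real h = 3 + 3 * real n" using hn by simp
    have "real (length (GI n)) - 2 * real h * 4 / 3 = ehat4 h"
      unfolding e r GI_len by (simp add: field_simps)
    then show ?thesis using g unfolding good_def by blast
  next
    case 2
    define n where "n = h div 3 - 2"
    have hn: "h = 7 + 3 * n" using 2 assms dm unfolding n_def by linarith
    have g: "good (3 + 3 * n) (GI n) 0 2 {0,2,3}" by (rule GI_good)
    have hh: "3 + 3 * n + 4 = h" using hn by simp
    from cap_inpath[OF g] have c: "inpath (CAP @ map (sh 4) (GI n))"
      "set (CAP @ map (sh 4) (GI n)) \<subseteq> {0..<h} \<times> {0..<4}" unfolding hh by auto
    have e: "ehat4 h = 4/3" using 2 by (simp add: ehat4_def)
    have r: "real h = 7 + 3 * real n" using hn by simp
    have l: "length (CAP @ map (sh 4) (GI n)) = 20 + 8 * n" by (simp add: GI_len CAP_def)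
    have "real (length (CAP @ map (sh 4) (GI n))) - 2 * real h * 4 / 3 = ehat4 h"
      unfolding e r l by (simp add: field_simps)
    then show ?thesis using c by (intro exI[of _ "CAP @ map (sh 4) (GI n)"]) (simp add: CAP_def)
  next
    case 3
    define n where "n = h div 3"
    have hn: "h = 2 + 3 * n" using 3 assms dm unfolding n_def by linarith
    have g: "good h (GJ n) 0 3 {0,2,3}" using GJ_good[of n] hn by simp
    have e: "ehat4 h = 2/3" using 3 by (simp add: ehat4_def)
    have r: "real h = 2 + 3 * real n" using hn by simp
    have "real (length (GJ n)) - 2 * real h * 4 / 3 = ehat4 h"
      unfolding e r GJ_len by (simp add: field_simps)
    then show ?thesis using g unfolding good_def by blast
  qed
qed

definition ws4 :: "(nat \<times> nat) list" where
  "ws4 = [(0,0),(0,1),(0,2),(0,3),(1,0),(1,3),(2,0),(2,3),(3,0),(3,1),(3,2),(3,3)]"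

lemma ws4_deg: "\<forall>c \<in> set ws4. length (filter (adjacent c) ws4) \<le> 2"
  unfolding ws4_def by (simp add: adjacent_def)

lemma ws4_sub: "set ws4 \<subseteq> {0..<4} \<times> {0..<4}"
  unfolding ws4_def by simp

lemma ws4_words: "set ws4 \<in> words2 4 4"
proof -
  have "degree_in (set ws4) c \<le> 2" if "c \<in> set ws4" for c
  proof -
    have "degree_in (set ws4) c = card (set (filter (adjacent c) ws4))"
      unfolding degree_in_def by simp
    also have "\<dots> \<le> length (filter (adjacent c) ws4)" by (rule card_length)
    also have "\<dots> \<le> 2" using that ws4_deg by blast
    finally show ?thesis .
  qed
  then show ?thesis unfolding words2_def using ws4_sub by blast
qed

lemma ws4_card: "card (set ws4) = 12"
  by (simp add: ws4_def)

theorem lemma4: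
  fixes h :: nat
  assumes "h \<ge> 4"
  shows "(\<exists>W \<in> words2 h 4. excess h 4 W = ehat4 h) \<and>
         (h > 4 \<longrightarrow> (\<exists>W \<in> words2 h 4. excess h 4 W = ehat4 h \<and> snake W))"
proof (cases "h = 4")
  case True
  have "excess h 4 (set ws4) = ehat4 h"
    using True by (simp add: excess_def ws4_card ehat4_def)
  then show ?thesis using True ws4_words by auto
next
  case False
  then have "h \<ge> 5" using assms by simp
  from exists_good[OF this] obtain xs where xs: "inpath xs" "set xs \<subseteq> {0..<h} \<times> {0..<4}" "xs \<noteq> []"
    "real (length xs) - 2 * real h * 4 / 3 = ehat4 h" by blast
  have f: "set xs \<in> words2 h 4" "snake (set xs)" "card (set xs) = length xs"
    using final[OF xs(1-3)] by auto
  have "excess h 4 (set xs) = ehat4 h" using xs(4) f(3) by (simp add: excess_def)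
  then show ?thesis using f by blast
qed

end
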